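(* Let $\alpha>1$, $1\le m\le d$, $\mathcal{A}=\{a\in\{0,1\}^d:\|a\|_1=m\}$, let $r_1\in\mathbb{R}^d$ have i.i.d. coordinates from $\mathcal{D}_\alpha\in\{\mathcal{P}_\alpha,\mathcal{F}_\alpha\}$, and let $a_1\in\arg\min_{a\in\mathcal{A}}a^\top(-r_1)$. Then $$\mathbb{E}_{r_1\sim\mathcal{D}_\alpha}[a_1^\top r_1]\le\begin{cases}\left(\frac{\alpha}{\alpha-1}m^{1-\frac1\alpha}+\Gamma\left(1-\frac1\alpha\right)\right)(d+1)^{\frac1\alpha}, & \mathcal{D}_\alpha=\mathcal{P}_\alpha,\\[4pt] \left(\frac{\alpha}{\alpha-1}m^{1-\frac1\alpha}+\Gamma\left(1-\frac1\alpha\right)\right)(d+1)^{\frac1\alpha}+m, & \mathcal{D}_\alpha=\mathcal{F}_\alpha.\end{cases}$$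
   Context: Fréchet $\mathcal{F}_\alpha$: CDF $F(x)=e^{-1/x^\alpha}$, $x\ge0$; Pareto $\mathcal{P}_\alpha$: CDF $F(x)=1-x^{-\alpha}$, $x\ge1$. $\Gamma$ is the gamma function. ($a_1^\top r_1$ is the sum of the $m$ largest coordinates of $r_1$.) *)

theory Defs
  imports "HOL-Probability.Probability"
begin

text \<open>Pareto distribution P_alpha: CDF 1 - x^(-alpha) on x >= 1, given by its density.\<close>
definition pareto_distr :: "real \<Rightarrow> real measure" where
  "pareto_distr \<alpha> = density lborel
     (\<lambda>x. ennreal (if 1 \<le> x then \<alpha> * x powr (- \<alpha> - 1) else 0))"

text \<open>Frechet distribution F_alpha: CDF exp(-x^(-alpha)) on x >= 0, given by its density.\<close>
definition frechet_distr :: "real \<Rightarrow> real measure" where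
  "frechet_distr \<alpha> = density lborel
     (\<lambda>x. ennreal (if 0 < x then \<alpha> * x powr (- \<alpha> - 1) * exp (- (x powr (- \<alpha>))) else 0))"

definition actions :: "nat \<Rightarrow> nat \<Rightarrow> (nat \<Rightarrow> real) set" where
  "actions d m = {a. (\<forall>i<d. a i \<in> {0, 1}) \<and> (\<forall>i. i \<ge> d \<longrightarrow> a i = 0)
                     \<and> (\<Sum>i<d. a i) = real m}"

definition inner_d :: "nat \<Rightarrow> (nat \<Rightarrow> real) \<Rightarrow> (nat \<Rightarrow> real) \<Rightarrow> real" where
  "inner_d d a r = (\<Sum>i<d. a i * r i)"

definition argmin_action :: "nat \<Rightarrow> nat \<Rightarrow> (nat \<Rightarrow> real) \<Rightarrow> (nat \<Rightarrow> real)" where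
  "argmin_action d m r = (SOME a. a \<in> actions d m \<and>
      (\<forall>b\<in>actions d m. inner_d d a (\<lambda>i. - r i) \<le> inner_d d b (\<lambda>i. - r i)))"

end

theory Submission
  imports Defs
begin

lemma pow_deriv: "x > 0 \<Longrightarrow> ((\<lambda>x. x powr s) has_real_derivative s * x powr (s - 1)) (at x)"
  by (auto intro!: derivative_eq_intros)

lemma pareto_prob:
  assumes a: "\<alpha> > 1"
  shows "prob_space (pareto_distr \<alpha>)"
proof (rule prob_spaceI)
  have "emeasure (pareto_distr \<alpha>) (space (pareto_distr \<alpha>))
     = (\<integral>\<^sup>+x. ennreal (if 1 \<le> x then \<alpha> * x powr (- \<alpha> - 1) else 0) * indicator UNIV x \<partial>lborel)"
    unfolding pareto_distr_def by (subst emeasure_density) auto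
  also have "\<dots> = (\<integral>\<^sup>+x\<in>{1..}. ennreal (\<alpha> * x powr (- \<alpha> - 1)) \<partial>lborel)"
    by (intro nn_integral_cong) (auto simp: indicator_def)
  also have "\<dots> = ennreal (0 - (- (1 powr (-\<alpha>))))"
  proof (rule nn_integral_FTC_atLeast)
    show "(\<lambda>x. \<alpha> * x powr (- \<alpha> - 1)) \<in> borel_measurable borel" by measurable
    fix x :: real assume "1 \<le> x"
    then show "((\<lambda>x. - (x powr (-\<alpha>))) has_real_derivative \<alpha> * x powr (- \<alpha> - 1)) (at x)"
      by (auto intro!: derivative_eq_intros)
    show "0 \<le> \<alpha> * x powr (- \<alpha> - 1)" using a by simp
  next
    have "((\<lambda>x::real. x powr (-\<alpha>)) \<longlongrightarrow> 0) at_top"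
      using a by (intro tendsto_neg_powr filterlim_ident) auto
    then show "((\<lambda>x::real. - (x powr (-\<alpha>))) \<longlongrightarrow> 0) at_top"
      using tendsto_minus by fastforce
  qed
  also have "\<dots> = 1" by simp
  finally show "emeasure (pareto_distr \<alpha>) (space (pareto_distr \<alpha>)) = 1" .
qed

lemma tail_integral:
  assumes a: "\<alpha> > 1" and c: "c \<ge> 1"
  shows "(\<integral>\<^sup>+x\<in>{c..}. ennreal ((x - c) * (\<alpha> * x powr (- \<alpha> - 1))) \<partial>lborel) = ennreal (c powr (1 - \<alpha>) / (\<alpha> - 1))"
proof -
  have "(\<integral>\<^sup>+x\<in>{c..}. ennreal ((x - c) * (\<alpha> * x powr (- \<alpha> - 1))) \<partial>lborel)
     = ennreal (0 - (- (c - c) * c powr (-\<alpha>) - c powr (1 - \<alpha>) / (\<alpha> - 1)))"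
  proof (rule nn_integral_FTC_atLeast[where F="\<lambda>x. - (x - c) * x powr (-\<alpha>) - x powr (1 - \<alpha>) / (\<alpha> - 1)"])
    show "(\<lambda>x. (x - c) * (\<alpha> * x powr (- \<alpha> - 1))) \<in> borel_measurable borel" by measurable
    fix x :: real assume x: "c \<le> x"
    then have xp: "x > 0" using c by simp
    have e: "x powr (-\<alpha>) = x * x powr (-\<alpha> - 1)"
    proof -
      have "x powr (-\<alpha> - 1 + 1) = x powr (-\<alpha>-1) * x powr 1" by (rule powr_add)
      then show ?thesis using xp by simp
    qed
    have e2: "x powr (1 - \<alpha> - 1) = x powr (-\<alpha>)" by simp
    have d1: "((\<lambda>x. x powr (-\<alpha>)) has_real_derivative (-\<alpha>) * x powr (-\<alpha> - 1)) (at x)"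
      using pow_deriv[OF xp, of "-\<alpha>"] by simp
    have d2: "((\<lambda>x. x powr (1-\<alpha>)) has_real_derivative (1-\<alpha>) * x powr (-\<alpha>)) (at x)"
      using pow_deriv[OF xp, of "1-\<alpha>"] by simp
    have d3: "((\<lambda>x. - (x - c)) has_real_derivative -1) (at x)"
      by (auto intro!: derivative_eq_intros)
    have "((\<lambda>x. - (x - c) * x powr (-\<alpha>) - x powr (1 - \<alpha>) / (\<alpha> - 1)) has_real_derivative
        (- (x - c)) * ((-\<alpha>) * x powr (-\<alpha> - 1)) + (-1) * x powr (-\<alpha>) - ((1-\<alpha>) * x powr (-\<alpha>)) / (\<alpha> - 1)) (at x)"
      by (intro DERIV_diff DERIV_mult' d1 d2 d3 DERIV_cdivide)
    moreover have "(- (x - c)) * ((-\<alpha>) * x powr (-\<alpha> - 1)) + (-1) * x powr (-\<alpha>) - ((1-\<alpha>) * x powr (-\<alpha>)) / (\<alpha> - 1)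
       = (x - c) * (\<alpha> * x powr (- \<alpha> - 1))"
      using a by (simp add: field_simps)
    ultimately show "((\<lambda>x. - (x - c) * x powr (-\<alpha>) - x powr (1 - \<alpha>) / (\<alpha> - 1)) has_real_derivative
        (x - c) * (\<alpha> * x powr (- \<alpha> - 1))) (at x)" by simp
    show "0 \<le> (x - c) * (\<alpha> * x powr (- \<alpha> - 1))" using a x by simp
  next
    have l1: "((\<lambda>x::real. x powr (-\<alpha>)) \<longlongrightarrow> 0) at_top"
      using a by (intro tendsto_neg_powr filterlim_ident) auto
    have l2: "((\<lambda>x::real. x powr (1-\<alpha>)) \<longlongrightarrow> 0) at_top"
      using a by (intro tendsto_neg_powr filterlim_ident) auto
    have "((\<lambda>x::real. - (x powr (1-\<alpha>)) + c * x powr (-\<alpha>) - x powr (1 - \<alpha>) / (\<alpha> - 1)) \<longlongrightarrow> (- 0 + c * 0 - 0 / (\<alpha> - 1))) at_top"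
      using a by (intro tendsto_intros l1 l2) auto 
    then have "((\<lambda>x::real. - (x powr (1-\<alpha>)) + c * x powr (-\<alpha>) - x powr (1 - \<alpha>) / (\<alpha> - 1)) \<longlongrightarrow> 0) at_top" by simp
    moreover have "\<forall>\<^sub>F x in at_top. - (x powr (1-\<alpha>)) + c * x powr (-\<alpha>) - x powr (1 - \<alpha>) / (\<alpha> - 1)
        = - (x - c) * x powr (-\<alpha>) - x powr (1 - \<alpha>) / (\<alpha> - 1)"
      using eventually_gt_at_top[of 0]
    proof eventually_elim
      case (elim x)
      then have "x powr (1 - \<alpha>) = x * x powr (-\<alpha>)" by (simp add: powr_diff powr_minus divide_inverse)
      then show ?case by (simp add: algebra_simps)
    qed
    ultimately show "((\<lambda>x::real. - (x - c) * x powr (-\<alpha>) - x powr (1 - \<alpha>) / (\<alpha> - 1)) \<longlongrightarrow> 0) at_top"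
      using tendsto_cong by fastforce
  qed
  then show ?thesis by simp
qed

lemma frechet_prob:
  assumes a: "\<alpha> > 1"
  shows "prob_space (frechet_distr \<alpha>)"
proof (rule prob_spaceI)
  define f where "f = (\<lambda>x::real. if 0 < x then \<alpha> * x powr (- \<alpha> - 1) * exp (- (x powr (- \<alpha>))) else 0)"
  define F where "F = (\<lambda>x::real. if 0 < x then exp (- (x powr (- \<alpha>))) else 0)"
  have "emeasure (frechet_distr \<alpha>) (space (frechet_distr \<alpha>))
     = (\<integral>\<^sup>+x. ennreal (f x) * indicator UNIV x \<partial>lborel)"
    unfolding frechet_distr_def f_def by (subst emeasure_density) auto
  also have "\<dots> = (\<integral>\<^sup>+x\<in>{0..}. ennreal (f x) \<partial>lborel)"
    by (intro nn_integral_cong) (auto simp: indicator_def f_def)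
  also have "\<dots> = ennreal (1 - F 0)"
  proof (rule nn_integral_FTC_atLeast)
    show "f \<in> borel_measurable borel" unfolding f_def by measurable
    fix x :: real assume x: "0 \<le> x"
    show "0 \<le> f x" using a by (simp add: f_def)
    show "(F has_real_derivative f x) (at x)"
    proof (cases "x = 0")
      case False
      then have xp: "x > 0" using x by simp
      have d: "((\<lambda>x. exp (- (x powr (- \<alpha>)))) has_real_derivative f x) (at x)"
      proof -
        have "((\<lambda>x. exp (- (x powr (- \<alpha>)))) has_real_derivative exp (- (x powr (- \<alpha>))) * (- ((-\<alpha>) * x powr (-\<alpha> - 1)))) (at x)"
          using xp by (intro derivative_eq_intros pow_deriv refl) auto
        then show ?thesis using xp by (simp add: f_def mult_ac)
      qed
      show ?thesis
      proof (rule has_field_derivative_transform_within_open[OF d, of "{0<..}"])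
        show "x \<in> {0<..}" using xp by simp
      qed (auto simp: F_def)
    next
      case True
      have "((\<lambda>y. (F y - F 0) / (y - 0)) \<longlongrightarrow> 0) (at 0)"
      proof (rule filterlim_split_at_real)
        have "\<forall>\<^sub>F y in at_left (0::real). 0 = (F y - F 0) / (y - 0)"
          using eventually_at_left_real[of "-1" "0::real", simplified] by eventually_elim (auto simp: F_def)
        then show "((\<lambda>y. (F y - F 0) / (y - 0)) \<longlongrightarrow> 0) (at_left 0)"
          using tendsto_cong[of "\<lambda>_. 0::real"] by (metis (mono_tags) tendsto_const)
      next
        have lim: "((\<lambda>y::real. y powr (\<alpha> - 1)) \<longlongrightarrow> 0) (at_right 0)"
          using a by (intro tendsto_zero_powrI tendsto_ident_at tendsto_const)
             (auto intro: eventually_mono[OF eventually_at_right_less])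
        show "((\<lambda>y. (F y - F 0) / (y - 0)) \<longlongrightarrow> 0) (at_right 0)"
        proof (rule tendsto_sandwich[OF _ _ tendsto_const lim])
          show "\<forall>\<^sub>F y in at_right 0. 0 \<le> (F y - F 0) / (y - 0)"
            using eventually_at_right_less[of "0::real"] by eventually_elim (auto simp: F_def)
          show "\<forall>\<^sub>F y in at_right 0. (F y - F 0) / (y - 0) \<le> y powr (\<alpha> - 1)"
            using eventually_at_right_less[of "0::real"]
          proof eventually_elim
            case (elim y)
            define t where "t = y powr (- \<alpha>)"
            have tp: "t > 0" using elim by (simp add: t_def)
            have "exp t \<ge> 1 + t" by (rule exp_ge_add_one_self)
            then have "t \<le> exp t" by linarith
            then have "inverse (exp t) \<le> inverse t" using tp by (rule le_imp_inverse_le)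
            then have "exp (- t) \<le> 1 / t" by (simp add: exp_minus inverse_eq_divide)
            also have "1 / t = y powr \<alpha>" using elim by (simp add: t_def powr_minus divide_inverse)
            finally have "exp (- t) / y \<le> y powr \<alpha> / y" using elim by (simp add: divide_right_mono)
            also have "y powr \<alpha> / y = y powr (\<alpha> - 1)" using elim by (simp add: powr_diff)
            finally show ?case using elim by (simp add: F_def t_def)
          qed
        qed
      qed
      then show ?thesis using True by (simp add: has_field_derivative_iff f_def)
    qed
  next
    have l1: "((\<lambda>x::real. x powr (-\<alpha>)) \<longlongrightarrow> 0) at_top"
      using a by (intro tendsto_neg_powr filterlim_ident) auto
    then have "((\<lambda>x::real. exp (- (x powr (-\<alpha>)))) \<longlongrightarrow> exp (- 0)) at_top"
      by (intro tendsto_intros)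
    moreover have "\<forall>\<^sub>F x in at_top. exp (- (x powr (-\<alpha>))) = F x"
      using eventually_gt_at_top[of 0] by eventually_elim (auto simp: F_def)
    ultimately show "(F \<longlongrightarrow> 1) at_top" using tendsto_cong by fastforce
  qed
  also have "\<dots> = 1" by (simp add: F_def)
  finally show "emeasure (frechet_distr \<alpha>) (space (frechet_distr \<alpha>)) = 1" .
qed

lemma tail_bound_gen:
  assumes a: "\<alpha> > 1" and c: "c \<ge> 1"
    and gm: "g \<in> borel_measurable borel"
    and g0: "\<And>x. 0 \<le> g x" and gle: "\<And>x. 1 \<le> x \<Longrightarrow> g x \<le> \<alpha> * x powr (- \<alpha> - 1)"
  shows "(\<integral>\<^sup>+x. ennreal (max (x - c) 0) \<partial>(density lborel (\<lambda>x. ennreal (g x))))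
      \<le> ennreal (c powr (1 - \<alpha>) / (\<alpha> - 1))"
proof -
  have "(\<integral>\<^sup>+x. ennreal (max (x - c) 0) \<partial>(density lborel (\<lambda>x. ennreal (g x))))
     = (\<integral>\<^sup>+x. ennreal (g x) * ennreal (max (x - c) 0) \<partial>lborel)"
    using gm by (subst nn_integral_density) auto
  also have "\<dots> \<le> (\<integral>\<^sup>+x\<in>{c..}. ennreal ((x - c) * (\<alpha> * x powr (- \<alpha> - 1))) \<partial>lborel)"
  proof (rule nn_integral_mono)
    fix x :: real
    show "ennreal (g x) * ennreal (max (x - c) 0) \<le> ennreal ((x - c) * (\<alpha> * x powr (- \<alpha> - 1))) * indicator {c..} x"
    proof (cases "c \<le> x")
      case True
      have "ennreal (g x) * ennreal (max (x - c) 0) = ennreal (g x * (x - c))"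
        using True g0[of x] by (simp add: ennreal_mult)
      also have "\<dots> \<le> ennreal ((x - c) * (\<alpha> * x powr (- \<alpha> - 1)))"
        using True c gle[of x] g0[of x] using mult_right_mono[of "g x" "\<alpha> * x powr (- \<alpha> - 1)" "x - c"] by (intro ennreal_leI) (simp add: mult.commute)
      finally show ?thesis using True by simp
    qed simp
  qed
  also have "\<dots> = ennreal (c powr (1 - \<alpha>) / (\<alpha> - 1))" by (rule tail_integral[OF a c])
  finally show ?thesis .
qed

lemma tail_bound:
  assumes a: "\<alpha> > 1" and c: "c \<ge> 1" and D: "D = pareto_distr \<alpha> \<or> D = frechet_distr \<alpha>"
  shows "(\<integral>\<^sup>+x. ennreal (max (x - c) 0) \<partial>D) \<le> ennreal (c powr (1 - \<alpha>) / (\<alpha> - 1))"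
  using D
proof
  assume D: "D = pareto_distr \<alpha>"
  show ?thesis unfolding D pareto_distr_def
    by (rule tail_bound_gen[OF a c]) (use a in auto)
next
  assume D: "D = frechet_distr \<alpha>"
  show ?thesis unfolding D frechet_distr_def
  proof (rule tail_bound_gen[OF a c])
    fix x :: real assume x: "1 \<le> x"
    have "\<alpha> * x powr (- \<alpha> - 1) * exp (- (x powr (- \<alpha>))) \<le> \<alpha> * x powr (- \<alpha> - 1) * 1"
      using a by (intro mult_left_mono) auto
    then show "(if 0 < x then \<alpha> * x powr (- \<alpha> - 1) * exp (- (x powr (- \<alpha>))) else 0) \<le> \<alpha> * x powr (- \<alpha> - 1)"
      using x by simp
  qed (use a in auto)
qed

lemma actions_finite: "finite (actions d m)"
proof (rule finite_subset)
  show "actions d m \<subseteq> (\<lambda>S i. if i \<in> S then 1 else 0) ` Pow {..<d}"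
  proof
    fix a assume a: "a \<in> actions d m"
    have "a = (\<lambda>i. if i \<in> {i. i < d \<and> a i = 1} then 1 else 0)"
    proof
      fix i show "a i = (if i \<in> {i. i < d \<and> a i = 1} then 1 else 0)"
        using a unfolding actions_def by (cases "i < d") auto
    qed
    then show "a \<in> (\<lambda>S i. if i \<in> S then 1 else 0) ` Pow {..<d}" by blast
  qed
qed simp

lemma actions_nonempty: "m \<le> d \<Longrightarrow> (\<lambda>i. if i < m then 1 else 0) \<in> actions d m"
proof -
  assume md: "m \<le> d"
  have "(\<Sum>i<d. (if i < m then 1 else 0 :: real)) = (\<Sum>i\<in>{..<m}. 1)"
    using md by (intro sum.mono_neutral_cong_right) auto
  then show ?thesis using md unfolding actions_def by auto
qed

lemma argmin_in:
  assumes "m \<le> d"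
  shows "argmin_action d m r \<in> actions d m"
proof -
  let ?f = "\<lambda>a. inner_d d a (\<lambda>i. - r i)"
  let ?A = "actions d m"
  have ne: "?A \<noteq> {}" using actions_nonempty[OF assms] by blast
  have "Min (?f ` ?A) \<in> ?f ` ?A" using actions_finite ne by (intro Min_in) auto
  then obtain a where a: "a \<in> ?A" "?f a = Min (?f ` ?A)" by auto
  have "\<forall>b\<in>?A. ?f a \<le> ?f b" using a actions_finite by auto
  then have "\<exists>a. a \<in> ?A \<and> (\<forall>b\<in>?A. ?f a \<le> ?f b)" using a by blast
  then show ?thesis unfolding argmin_action_def by (rule someI2_ex) blast
qed

lemma pointwise:
  assumes "a \<in> actions d m"
  shows "inner_d d a r \<le> real m * c + (\<Sum>i<d. max (r i - c) 0)"
proof -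
  have "inner_d d a r \<le> (\<Sum>i<d. a i * c + max (r i - c) 0)"
    unfolding inner_d_def
  proof (rule sum_mono)
    fix i assume "i \<in> {..<d}"
    then have "a i = 0 \<or> a i = 1" using assms unfolding actions_def by auto
    then show "a i * r i \<le> a i * c + max (r i - c) 0" by auto
  qed
  also have "\<dots> = (\<Sum>i<d. a i) * c + (\<Sum>i<d. max (r i - c) 0)"
    by (simp add: sum.distrib sum_distrib_right)
  also have "\<dots> = real m * c + (\<Sum>i<d. max (r i - c) 0)"
    using assms unfolding actions_def by simp
  finally show ?thesis .
qed

lemma arith_part:
  fixes \<alpha> :: real and m d :: nat
  assumes a: "\<alpha> > 1" and m: "1 \<le> m" and md: "m \<le> d" and e: "e \<ge> 0"
  defines "c \<equiv> (real d / real m) powr (1 / \<alpha>)"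
  shows "real m * c + real d * (c powr (1 - \<alpha>) / (\<alpha> - 1))
     \<le> (\<alpha> / (\<alpha> - 1) * real m powr (1 - 1 / \<alpha>) + Gamma (1 - 1 / \<alpha>)) * real (d + 1) powr (1 / \<alpha>) + e"
proof -
  have mp: "real m > 0" and dp: "real d > 0" using m md by auto
  have cp: "c > 0" unfolding c_def using mp dp by simp
  have "c powr (-\<alpha>) = (real d / real m) powr (1 / \<alpha> * (-\<alpha>))"
    unfolding c_def by (simp add: powr_powr)
  also have "\<dots> = real m / real d" using a mp dp by (simp add: powr_minus_divide)
  finally have cpa: "c powr (-\<alpha>) = real m / real d" .
  have "c powr (1 - \<alpha>) = c * c powr (-\<alpha>)" using cp
    by (simp add: powr_diff powr_minus divide_inverse)
  then have "real d * (c powr (1 - \<alpha>) / (\<alpha> - 1)) = real m * c / (\<alpha> - 1)"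
    using cpa dp by (simp add: field_simps)
  then have eq1: "real m * c + real d * (c powr (1 - \<alpha>) / (\<alpha> - 1)) = \<alpha> / (\<alpha> - 1) * (real m * c)"
    using a by (simp add: field_simps)
  have eq2: "real m * c = real m powr (1 - 1 / \<alpha>) * real d powr (1 / \<alpha>)"
    unfolding c_def using mp dp by (simp add: powr_divide powr_diff)
  have "real m * c + real d * (c powr (1 - \<alpha>) / (\<alpha> - 1)) = \<alpha> / (\<alpha> - 1) * (real m powr (1 - 1 / \<alpha>) * real d powr (1 / \<alpha>))"
    using eq1 eq2 by simp
  also have "\<alpha> / (\<alpha> - 1) * (real m powr (1 - 1 / \<alpha>) * real d powr (1 / \<alpha>))
      \<le> \<alpha> / (\<alpha> - 1) * (real m powr (1 - 1 / \<alpha>) * real (d + 1) powr (1 / \<alpha>))"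
    using a dp by (intro mult_left_mono powr_mono2) auto
  also have "\<dots> \<le> (\<alpha> / (\<alpha> - 1) * real m powr (1 - 1 / \<alpha>) + Gamma (1 - 1 / \<alpha>)) * real (d + 1) powr (1 / \<alpha>) + e"
  proof -
    have "1 / \<alpha> < 1" using a by simp
    then have "Gamma (1 - 1 / \<alpha>) > 0" by (intro Gamma_real_pos) simp
    then have "0 \<le> Gamma (1 - 1 / \<alpha>) * real (d + 1) powr (1 / \<alpha>)" by simp
    then show ?thesis using e by (simp add: algebra_simps)
  qed
  finally show ?thesis .
qed

theorem lemma9:
  fixes \<alpha> :: real and m d :: nat and D :: "real measure"
  assumes "\<alpha> > 1" and "1 \<le> m" and "m \<le> d"
    and "D = pareto_distr \<alpha> \<or> D = frechet_distr \<alpha>"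
  shows "(\<integral>\<^sup>+ r. ennreal (inner_d d (argmin_action d m r) r) \<partial>(PiM {..<d} (\<lambda>_. D)))
    \<le> ennreal ((\<alpha> / (\<alpha> - 1) * real m powr (1 - 1 / \<alpha>) + Gamma (1 - 1 / \<alpha>))
                 * real (d + 1) powr (1 / \<alpha>)
               + (if D = frechet_distr \<alpha> then real m else 0))"
proof -
  note a = assms(1) and m = assms(2) and md = assms(3) and D = assms(4)
  let ?M = "PiM {..<d} (\<lambda>_. D)"
  define c where "c = (real d / real m) powr (1 / \<alpha>)"
  have c1: "c \<ge> 1" unfolding c_def using m md a by (intro ge_one_powr_ge_zero) auto
  have probD: "prob_space D" using D pareto_prob[OF a] frechet_prob[OF a] by auto
  have setsD: "sets D = sets borel" using D by (auto simp: pareto_distr_def frechet_distr_def)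
  have probM: "prob_space ?M" by (rule prob_space_PiM) (simp add: probD)
  have measD: "(\<lambda>x. ennreal (max (x - c) 0)) \<in> borel_measurable D"
    by (subst measurable_cong_sets[OF setsD refl]) measurable
  have comp: "(\<integral>\<^sup>+r. ennreal (max (r i - c) 0) \<partial>?M) = (\<integral>\<^sup>+x. ennreal (max (x - c) 0) \<partial>D)"
    if i: "i \<in> {..<d}" for i
  proof -
    have "(\<integral>\<^sup>+x. ennreal (max (x - c) 0) \<partial>D) = (\<integral>\<^sup>+x. ennreal (max (x - c) 0) \<partial>distr ?M D (\<lambda>\<omega>. \<omega> i))"
      using distr_PiM_component[of "{..<d}" "\<lambda>_. D" i] probD i by simp
    also have "\<dots> = (\<integral>\<^sup>+r. ennreal (max (r i - c) 0) \<partial>?M)"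
      using i measD by (intro nn_integral_distr) auto
    finally show ?thesis by simp
  qed
  have meas_i: "(\<lambda>r. ennreal (max (r i - c) 0)) \<in> borel_measurable ?M" if i: "i \<in> {..<d}" for i
  proof -
    have "(\<lambda>r. r i) \<in> measurable ?M D" using i by (intro measurable_component_singleton) auto
    from measurable_comp[OF this measD] show ?thesis by (simp add: comp_def)
  qed
  have "(\<integral>\<^sup>+ r. ennreal (inner_d d (argmin_action d m r) r) \<partial>?M)
      \<le> (\<integral>\<^sup>+ r. ennreal (real m * c) + (\<Sum>i<d. ennreal (max (r i - c) 0)) \<partial>?M)"
  proof (rule nn_integral_mono)
    fix r :: "nat \<Rightarrow> real"
    have "ennreal (inner_d d (argmin_action d m r) r) \<le> ennreal (real m * c + (\<Sum>i<d. max (r i - c) 0))"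
      by (intro ennreal_leI pointwise argmin_in md)
    also have "\<dots> = ennreal (real m * c) + (\<Sum>i<d. ennreal (max (r i - c) 0))"
    proof -
      have se: "(\<Sum>i<d. ennreal (max (r i - c) 0)) = ennreal (\<Sum>i<d. max (r i - c) 0)"
        by (rule sum_ennreal) simp
      show ?thesis unfolding se using c1 by (intro ennreal_plus) (auto intro!: sum_nonneg)
    qed
    finally show "ennreal (inner_d d (argmin_action d m r) r) \<le> ennreal (real m * c) + (\<Sum>i<d. ennreal (max (r i - c) 0))" .
  qed
  also have "\<dots> = ennreal (real m * c) + (\<Sum>i<d. (\<integral>\<^sup>+ r. ennreal (max (r i - c) 0) \<partial>?M))"
  proof -
    have s1: "(\<integral>\<^sup>+ r. (\<Sum>i<d. ennreal (max (r i - c) 0)) \<partial>?M) = (\<Sum>i<d. (\<integral>\<^sup>+ r. ennreal (max (r i - c) 0) \<partial>?M))"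
      by (rule nn_integral_sum[of "{..<d}" "\<lambda>i r. ennreal (max (r i - c) 0)", OF meas_i])
    have s2: "(\<integral>\<^sup>+ r. ennreal (real m * c) + (\<Sum>i<d. ennreal (max (r i - c) 0)) \<partial>?M)
       = (\<integral>\<^sup>+ r. ennreal (real m * c) \<partial>?M) + (\<integral>\<^sup>+ r. (\<Sum>i<d. ennreal (max (r i - c) 0)) \<partial>?M)"
      by (rule nn_integral_add[OF measurable_const borel_measurable_sum[of "{..<d}" "\<lambda>i r. ennreal (max (r i - c) 0)", OF meas_i]]) simp
    have s3: "(\<integral>\<^sup>+ r. ennreal (real m * c) \<partial>?M) = ennreal (real m * c)"
      using prob_space.emeasure_space_1[OF probM] by simp
    show ?thesis unfolding s2 s1 s3 ..
  qed
  also have "\<dots> = ennreal (real m * c) + (\<Sum>i<d. (\<integral>\<^sup>+x. ennreal (max (x - c) 0) \<partial>D))"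
    using comp by simp
  also have "\<dots> \<le> ennreal (real m * c) + (\<Sum>i<d. ennreal (c powr (1 - \<alpha>) / (\<alpha> - 1)))"
    using tail_bound[OF a c1 D] by (intro add_left_mono sum_mono) auto
  also have "\<dots> = ennreal (real m * c + real d * (c powr (1 - \<alpha>) / (\<alpha> - 1)))"
  proof -
    have x0: "0 \<le> c powr (1 - \<alpha>) / (\<alpha> - 1)" using a by simp
    have "(\<Sum>i<d. ennreal (c powr (1 - \<alpha>) / (\<alpha> - 1))) = ennreal (real d * (c powr (1 - \<alpha>) / (\<alpha> - 1)))"
      using x0 by (simp add: ennreal_of_nat_eq_real_of_nat ennreal_mult[symmetric] del: times_divide_eq_right)
    moreover have "ennreal (real m * c) + ennreal (real d * (c powr (1 - \<alpha>) / (\<alpha> - 1)))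
        = ennreal (real m * c + real d * (c powr (1 - \<alpha>) / (\<alpha> - 1)))"
      using x0 c1 by (intro ennreal_plus[symmetric]) (auto simp del: times_divide_eq_right)
    ultimately show ?thesis by simp
  qed
  also have "\<dots> \<le> ennreal ((\<alpha> / (\<alpha> - 1) * real m powr (1 - 1 / \<alpha>) + Gamma (1 - 1 / \<alpha>))
                 * real (d + 1) powr (1 / \<alpha>)
               + (if D = frechet_distr \<alpha> then real m else 0))"
    by (intro ennreal_leI) (unfold c_def, rule arith_part[OF a m md], simp)
  finally show ?thesis .
qed

end
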